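(* Suppose that for every $x\in\mathcal{X}$ and $N\in\mathbb{N}^+$, $W_{x,N}=\frac1N\sum_{k=1}^N W_x^{(k)}$ where $W_x^{(1)},\dots,W_x^{(N)}$ are i.i.d. with law $Q_x$ on $(0,\infty)$ and $\mathbb{E}_{Q_x}[W_x]=1$ for $W_x\sim Q_x$; let $Q_{x,N}$ be the law of $W_{x,N}$. Consider the conditions: (W1) for every $\delta>0$, $\lim_{N\to\infty}\sup_{x\in\mathcal{X}}\mathbb{P}_{Q_{x,N}}[|W_{x,N}-1|\ge\delta]=0$; (W2) $\lim_{N\to\infty}\sup_{x\in\mathcal{X}}\mathbb{E}_{Q_{x,N}}[W_{x,N}^{-1}]=1$; (W3) $\lim_{K\to\infty}\sup_{x\in\mathcal{X}}\mathbb{E}_{Q_x}[W_x\mathbb{1}_{\{W_x>K\}}]=0$; (W4) there exist $\gamma\in(0,1)$ and constants $M<\infty$, $\beta>0$ such that $\sup_{x\in\mathcal{X}}\mathbb{P}_{Q_x}[W_x\le w]\le Mw^\beta$ for all $w\in(0,\gamma)$. Then (i) (W3) implies (W1); (ii) (W1) and (W4) together imply (W2). *)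

theory Defs
  imports "HOL-Probability.Probability"
begin

definition mean_law :: "real measure \<Rightarrow> nat \<Rightarrow> real measure" where
  "mean_law Q N = distr (PiM {1..N} (\<lambda>k. Q)) borel (\<lambda>\<omega>. (\<Sum>k\<in>{1..N}. \<omega> k) / real N)"

definition W1 :: "('x \<Rightarrow> real measure) \<Rightarrow> bool" where
  "W1 Q \<longleftrightarrow> (\<forall>\<delta>>0. (\<lambda>N. SUP x. emeasure (mean_law (Q x) N) {w. \<bar>w - 1\<bar> \<ge> \<delta>})
                      \<longlonglongrightarrow> 0)"

definition W2 :: "('x \<Rightarrow> real measure) \<Rightarrow> bool" where
  "W2 Q \<longleftrightarrow> (\<lambda>N. SUP x. \<integral>\<^sup>+ w. ennreal (1 / w) \<partial>(mean_law (Q x) N)) \<longlonglongrightarrow> 1"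

definition W3 :: "('x \<Rightarrow> real measure) \<Rightarrow> bool" where
  "W3 Q \<longleftrightarrow> ((\<lambda>K::real. SUP x. \<integral>\<^sup>+ w. ennreal (w * indicator {K<..} w) \<partial>(Q x))
              \<longlongrightarrow> 0) at_top"

definition W4 :: "('x \<Rightarrow> real measure) \<Rightarrow> bool" where
  "W4 Q \<longleftrightarrow> (\<exists>\<gamma>::real. 0 < \<gamma> \<and> \<gamma> < 1 \<and> (\<exists>(M::real) (\<beta>::real). \<beta> > 0 \<and>
      (\<forall>w. 0 < w \<and> w < \<gamma> \<longrightarrow> (SUP x. emeasure (Q x) {..w}) \<le> ennreal (M * w powr \<beta>))))"

end

theory Submission
  imports Defs
begin

lemma prodQ_nn:
  assumes Q: "prob_space Q" and I: "finite I" and f: "\<And>i. i \<in> I \<Longrightarrow> f i \<in> borel_measurable Q"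
  shows "(\<integral>\<^sup>+\<omega>. (\<Prod>i\<in>I. f i (\<omega> i)) \<partial>PiM I (\<lambda>_::nat. Q)) = (\<Prod>i\<in>I. \<integral>\<^sup>+w. f i w \<partial>Q)"
proof -
  interpret prob_space Q by fact
  interpret product_sigma_finite "\<lambda>_::nat. Q"
    by (simp add: product_sigma_finite_def sigma_finite_measure_axioms)
  show ?thesis using I f by (rule product_nn_integral_prod)
qed

lemma prodQ_L:
  fixes f :: "nat \<Rightarrow> real \<Rightarrow> real"
  assumes Q: "prob_space Q" and I: "finite I" and f: "\<And>i. i \<in> I \<Longrightarrow> integrable Q (f i)"
  shows "(\<integral>\<omega>. (\<Prod>i\<in>I. f i (\<omega> i)) \<partial>PiM I (\<lambda>_::nat. Q)) = (\<Prod>i\<in>I. \<integral>w. f i w \<partial>Q)"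
    and "integrable (PiM I (\<lambda>_::nat. Q)) (\<lambda>\<omega>. (\<Prod>i\<in>I. f i (\<omega> i)))"
proof -
  interpret prob_space Q by fact
  interpret product_sigma_finite "\<lambda>_::nat. Q"
    by (simp add: product_sigma_finite_def sigma_finite_measure_axioms)
  show "(\<integral>\<omega>. (\<Prod>i\<in>I. f i (\<omega> i)) \<partial>PiM I (\<lambda>_::nat. Q)) = (\<Prod>i\<in>I. \<integral>w. f i w \<partial>Q)"
    using I f by (rule product_integral_prod)
  show "integrable (PiM I (\<lambda>_::nat. Q)) (\<lambda>\<omega>. (\<Prod>i\<in>I. f i (\<omega> i)))"
    using I f by (rule product_integrable_prod)
qed

lemma marg_L:
  fixes g :: "real \<Rightarrow> real"
  assumes Q: "prob_space Q" and I: "finite I" "k \<in> I" and g: "integrable Q g"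
  shows "(\<integral>\<omega>. g (\<omega> k) \<partial>PiM I (\<lambda>_::nat. Q)) = (\<integral>w. g w \<partial>Q)"
    and "integrable (PiM I (\<lambda>_::nat. Q)) (\<lambda>\<omega>. g (\<omega> k))"
proof -
  interpret prob_space Q by fact
  define f where "f i = (if i = k then g else (\<lambda>_. 1::real))" for i
  have fi: "\<And>i. i \<in> I \<Longrightarrow> integrable Q (f i)" using g by (auto simp: f_def)
  have e: "\<And>\<omega>. (\<Prod>i\<in>I. f i (\<omega> i)) = g (\<omega> k)"
  proof -
    fix \<omega> :: "nat \<Rightarrow> real"
    have "(\<Prod>i\<in>I. f i (\<omega> i)) = (\<Prod>i\<in>I. if i = k then g (\<omega> i) else 1)"
      by (rule prod.cong) (auto simp: f_def)
    then show "(\<Prod>i\<in>I. f i (\<omega> i)) = g (\<omega> k)" using I by simp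
  qed
  have e2: "(\<Prod>i\<in>I. \<integral>w. f i w \<partial>Q) = (\<integral>w. g w \<partial>Q)"
  proof -
    have "(\<Prod>i\<in>I. \<integral>w. f i w \<partial>Q) = (\<Prod>i\<in>I. if i = k then (\<integral>w. g w \<partial>Q) else 1)"
      by (rule prod.cong) (auto simp: f_def prob_space)
    then show ?thesis using I by simp
  qed
  show "(\<integral>\<omega>. g (\<omega> k) \<partial>PiM I (\<lambda>_::nat. Q)) = (\<integral>w. g w \<partial>Q)"
    using prodQ_L(1)[of Q I f, OF Q I(1) fi] by (simp add: e e2)
  show "integrable (PiM I (\<lambda>_::nat. Q)) (\<lambda>\<omega>. g (\<omega> k))"
    using prodQ_L(2)[of Q I f, OF Q I(1) fi] by (simp add: e)
qed

lemma pair_L: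
  fixes g h :: "real \<Rightarrow> real"
  assumes Q: "prob_space Q" and I: "finite I" "i \<in> I" "j \<in> I" "i \<noteq> j"
    and g: "integrable Q g" and h: "integrable Q h"
  shows "(\<integral>\<omega>. g (\<omega> i) * h (\<omega> j) \<partial>PiM I (\<lambda>_::nat. Q)) = (\<integral>w. g w \<partial>Q) * (\<integral>w. h w \<partial>Q)"
    and "integrable (PiM I (\<lambda>_::nat. Q)) (\<lambda>\<omega>. g (\<omega> i) * h (\<omega> j))"
proof -
  interpret prob_space Q by fact
  define f where "f l = (if l = i then g else if l = j then h else (\<lambda>_. 1::real))" for l
  have fi: "\<And>l. l \<in> I \<Longrightarrow> integrable Q (f l)" using g h by (auto simp: f_def)
  have I2: "I = insert i (insert j (I - {i, j}))" using I by auto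
  have e: "\<And>\<omega>. (\<Prod>l\<in>I. f l (\<omega> l)) = g (\<omega> i) * h (\<omega> j)"
  proof -
    fix \<omega> :: "nat \<Rightarrow> real"
    have "(\<Prod>l\<in>I. f l (\<omega> l)) = f i (\<omega> i) * (f j (\<omega> j) * (\<Prod>l\<in>I - {i, j}. f l (\<omega> l)))"
      using I by (subst I2) (simp add: prod.insert_remove)
    also have "(\<Prod>l\<in>I - {i, j}. f l (\<omega> l)) = 1" by (intro prod.neutral) (auto simp: f_def)
    finally show "(\<Prod>l\<in>I. f l (\<omega> l)) = g (\<omega> i) * h (\<omega> j)" using I by (simp add: f_def)
  qed
  have e2: "(\<Prod>l\<in>I. \<integral>w. f l w \<partial>Q) = (\<integral>w. g w \<partial>Q) * (\<integral>w. h w \<partial>Q)"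
  proof -
    have "(\<Prod>l\<in>I. \<integral>w. f l w \<partial>Q) = (\<integral>w. f i w \<partial>Q) * ((\<integral>w. f j w \<partial>Q) * (\<Prod>l\<in>I - {i, j}. \<integral>w. f l w \<partial>Q))"
      using I by (subst I2) (simp add: prod.insert_remove)
    also have "(\<Prod>l\<in>I - {i, j}. \<integral>w. f l w \<partial>Q) = 1" by (intro prod.neutral) (auto simp: f_def prob_space)
    finally show ?thesis using I by (simp add: f_def)
  qed
  show "(\<integral>\<omega>. g (\<omega> i) * h (\<omega> j) \<partial>PiM I (\<lambda>_::nat. Q)) = (\<integral>w. g w \<partial>Q) * (\<integral>w. h w \<partial>Q)"
    using prodQ_L(1)[of Q I f, OF Q I(1) fi] by (simp add: e e2)
  show "integrable (PiM I (\<lambda>_::nat. Q)) (\<lambda>\<omega>. g (\<omega> i) * h (\<omega> j))"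
    using prodQ_L(2)[of Q I f, OF Q I(1) fi] by (simp add: e)
qed

lemma key_ineq:
  fixes a b e \<delta> :: real
  assumes "\<delta> > 0" "b \<ge> 0" "e \<le> \<delta>/3" "\<delta> \<le> \<bar>a\<bar> + b + e"
  shows "1 \<le> 9/\<delta>^2 * a^2 + 3/\<delta> * b"
proof (cases "\<bar>a\<bar> \<ge> \<delta>/3")
  case True
  then have "(\<delta>/3)^2 \<le> a^2" using assms(1) by (metis abs_le_square_iff abs_of_pos divide_pos_pos zero_less_numeral)
  then have "1 \<le> 9/\<delta>^2 * a^2" using assms(1) by (simp add: field_simps power2_eq_square)
  moreover have "0 \<le> 3/\<delta> * b" using assms by simp
  ultimately show ?thesis by linarith
next
  case False
  then have "b \<ge> \<delta>/3" using assms by linarith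
  then have "1 \<le> 3/\<delta> * b" using assms(1) by (simp add: field_simps)
  moreover have "0 \<le> 9/\<delta>^2 * a^2" by simp
  ultimately show ?thesis by linarith
qed

lemma W1_bound:
  fixes Q :: "real measure" and N :: nat and K \<delta> e :: real
  assumes Q: "prob_space Q" and sQ: "sets Q = sets borel" and pos: "AE w in Q. 0 < w"
    and int: "integrable Q (\<lambda>w. w)" and mean1: "(\<integral>w. w \<partial>Q) = 1"
    and \<delta>: "\<delta> > 0" and K: "K > 0" and N: "N \<ge> 1"
    and eK: "(\<integral>\<^sup>+w. ennreal (w * indicator {K<..} w) \<partial>Q) \<le> ennreal e" and e: "e \<le> \<delta>/3" "0 \<le> e"
  shows "emeasure (mean_law Q N) {w. \<delta> \<le> \<bar>w - 1\<bar>} \<le> ennreal (9*K^2/(N*\<delta>^2) + 3*e/\<delta>)"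
proof -
  interpret prob_space Q by fact
  define P where "P = PiM {1..N} (\<lambda>_::nat. Q)"
  interpret P: prob_space P unfolding P_def by (intro prob_space_PiM) (simp add: Q)
  have spQ: "space Q = UNIV" by (metis sQ sets_eq_imp_space_eq space_borel)
  have mQ: "borel_measurable Q = borel_measurable borel" by (rule measurable_cong_sets[OF sQ refl])
  define Y where "Y w = max 0 (min w K)" for w :: real
  define D where "D w = w - Y w" for w
  have Ymeas: "Y \<in> borel_measurable Q" unfolding mQ Y_def by measurable
  have intY: "integrable Q Y"
    by (rule integrable_const_bound[where B=K]) (use K Ymeas in \<open>auto simp: Y_def intro!: AE_I2\<close>)
  have intD: "integrable Q D" unfolding D_def using int intY by auto
  have intaD: "integrable Q (\<lambda>w. \<bar>D w\<bar>)" using intD by auto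
  define m where "m = (\<integral>w. Y w \<partial>Q)"
  have m0: "0 \<le> m" unfolding m_def by (rule integral_nonneg_AE) (auto simp: Y_def)
  have mK: "m \<le> K"
  proof -
    have "m \<le> (\<integral>w. K \<partial>Q)" unfolding m_def by (rule integral_mono) (use intY K in \<open>auto simp: Y_def\<close>)
    then show ?thesis by (simp add: prob_space)
  qed
  have aD: "(\<integral>w. \<bar>D w\<bar> \<partial>Q) \<le> e"
  proof -
    have "ennreal (\<integral>w. \<bar>D w\<bar> \<partial>Q) = (\<integral>\<^sup>+w. ennreal \<bar>D w\<bar> \<partial>Q)"
      by (rule nn_integral_eq_integral[symmetric]) (use intaD in auto)
    also have "\<dots> \<le> (\<integral>\<^sup>+w. ennreal (w * indicator {K<..} w) \<partial>Q)"
      using pos by (intro nn_integral_mono_AE) (auto elim!: eventually_mono simp: D_def Y_def indicator_def)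
    also have "\<dots> \<le> ennreal e" by (rule eK)
    finally show ?thesis using e by (simp add: ennreal_le_iff)
  qed
  have m1: "\<bar>1 - m\<bar> \<le> e"
  proof -
    have "1 - m = (\<integral>w. D w \<partial>Q)" unfolding D_def m_def mean1[symmetric]
      using int intY by (simp add: Bochner_Integration.integral_diff)
    also have "\<bar>\<dots>\<bar> \<le> (\<integral>w. \<bar>D w\<bar> \<partial>Q)" by (rule integral_abs_bound)
    finally show ?thesis using aD by linarith
  qed
  define I where "I = {1..N}"
  have I: "finite I" "card I = N" by (auto simp: I_def)
  define V where "V = (\<integral>w. (Y w - m) * (Y w - m) \<partial>Q)"
  have intYm: "integrable Q (\<lambda>w. Y w - m)" using intY by auto
  have intYm2: "integrable Q (\<lambda>w. (Y w - m) * (Y w - m))"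
  proof (rule integrable_const_bound[where B="K^2"])
    have bYm: "\<bar>Y w - m\<bar> \<le> K" for w using m0 mK K by (auto simp: Y_def)
    show "AE x in Q. norm ((Y x - m) * (Y x - m)) \<le> K^2"
      using bYm by (intro AE_I2) (metis abs_ge_zero abs_mult mult_mono' power2_eq_square real_norm_def)
    show "(\<lambda>w. (Y w - m) * (Y w - m)) \<in> borel_measurable Q" using Ymeas by measurable
  qed
  have VK: "V \<le> K^2"
  proof -
    have "V \<le> (\<integral>w. K^2 \<partial>Q)" unfolding V_def
    proof (rule integral_mono)
      have bYm: "\<bar>Y w - m\<bar> \<le> K" for w using m0 mK K by (auto simp: Y_def)
      show "(Y w - m) * (Y w - m) \<le> K^2" for w
        using bYm[of w] by (metis abs_le_square_iff abs_of_pos K power2_eq_square)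
    qed (use intYm2 in auto)
    then show ?thesis by (simp add: prob_space)
  qed
  have EYm: "(\<integral>w. Y w - m \<partial>Q) = 0" using intY by (simp add: m_def prob_space)
  define Z where "Z k \<omega> = Y (\<omega> k) - m" for k and \<omega> :: "nat \<Rightarrow> real"
  have ZZ: "integrable P (\<lambda>\<omega>. Z i \<omega> * Z j \<omega>) \<and> (\<integral>\<omega>. Z i \<omega> * Z j \<omega> \<partial>P) = (if i = j then V else 0)"
    if "i \<in> I" "j \<in> I" for i j
  proof (cases "i = j")
    case True
    then show ?thesis using marg_L[OF Q I(1) that(1) intYm2] by (simp add: Z_def P_def I_def V_def)
  next
    case False
    then show ?thesis using pair_L[OF Q I(1) that False intYm intYm] by (simp add: Z_def P_def I_def EYm)
  qed
  have EZ2: "(\<integral>\<omega>. (\<Sum>k\<in>I. Z k \<omega>)^2 \<partial>P) = N * V"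
  proof -
    have "(\<integral>\<omega>. (\<Sum>k\<in>I. Z k \<omega>)^2 \<partial>P) = (\<integral>\<omega>. (\<Sum>i\<in>I. \<Sum>j\<in>I. Z i \<omega> * Z j \<omega>) \<partial>P)"
      by (simp add: power2_eq_square sum_product)
    also have "\<dots> = (\<Sum>i\<in>I. \<Sum>j\<in>I. (\<integral>\<omega>. Z i \<omega> * Z j \<omega> \<partial>P))"
      using ZZ by (simp add: integral_sum integrable_sum)
    also have "\<dots> = (\<Sum>i\<in>I. \<Sum>j\<in>I. (if i = j then V else 0))"
      using ZZ by (intro sum.cong) auto
    also have "\<dots> = N * V" using I by simp
    finally show ?thesis .
  qed
  have intZ2: "integrable P (\<lambda>\<omega>. (\<Sum>k\<in>I. Z k \<omega>)^2)"
    using ZZ by (simp add: power2_eq_square sum_product integrable_sum)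
  have aDk: "integrable P (\<lambda>\<omega>. \<bar>D (\<omega> k)\<bar>) \<and> (\<integral>\<omega>. \<bar>D (\<omega> k)\<bar> \<partial>P) = (\<integral>w. \<bar>D w\<bar> \<partial>Q)" if "k \<in> I" for k
    using marg_L[OF Q I(1) that intaD] by (simp add: P_def I_def)
  have intSD: "integrable P (\<lambda>\<omega>. \<Sum>k\<in>I. \<bar>D (\<omega> k)\<bar>)" using aDk by auto
  have ESD: "(\<integral>\<omega>. (\<Sum>k\<in>I. \<bar>D (\<omega> k)\<bar>) \<partial>P) = N * (\<integral>w. \<bar>D w\<bar> \<partial>Q)"
    using aDk I by (simp add: integral_sum)
  define G where "G \<omega> = 9/\<delta>^2 * ((\<Sum>k\<in>I. Z k \<omega>)^2 / N^2) + 3/\<delta> * ((\<Sum>k\<in>I. \<bar>D (\<omega> k)\<bar>) / N)" for \<omega>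
  have intG: "integrable P G" unfolding G_def using intZ2 intSD by auto
  have EG: "(\<integral>\<omega>. G \<omega> \<partial>P) \<le> 9*K^2/(N*\<delta>^2) + 3*e/\<delta>"
  proof -
    have "(\<integral>\<omega>. G \<omega> \<partial>P) = 9/\<delta>^2 * (N * V / N^2) + 3/\<delta> * (N * (\<integral>w. \<bar>D w\<bar> \<partial>Q) / N)"
      unfolding G_def using intZ2 intSD EZ2 ESD by simp
    also have "\<dots> = 9/\<delta>^2 * (V / N) + 3/\<delta> * (\<integral>w. \<bar>D w\<bar> \<partial>Q)"
      using N by (simp add: power2_eq_square)
    also have "\<dots> \<le> 9/\<delta>^2 * (K^2 / N) + 3/\<delta> * e"
      using VK aD \<delta> N by (intro add_mono mult_left_mono divide_right_mono) auto
    finally show ?thesis by (simp add: field_simps)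
  qed
  define S where "S \<omega> = (\<Sum>k\<in>{1..N}. \<omega> k) / real N" for \<omega> :: "nat \<Rightarrow> real"
  have intS: "integrable P (\<lambda>\<omega>. \<Sum>k\<in>I. \<omega> k)"
    using marg_L(2)[OF Q I(1) _ int] by (auto simp: P_def I_def)
  have Smeas: "S \<in> borel_measurable P"
    using borel_measurable_integrable[OF intS] unfolding S_def I_def by measurable
  have Aset: "{w::real. \<delta> \<le> \<bar>w - 1\<bar>} \<in> sets borel" by measurable
  have "emeasure (mean_law Q N) {w. \<delta> \<le> \<bar>w - 1\<bar>} = emeasure P (S -` {w. \<delta> \<le> \<bar>w - 1\<bar>} \<inter> space P)"
    unfolding mean_law_def P_def[symmetric] S_def[abs_def, symmetric]
    by (rule emeasure_distr[OF Smeas Aset])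
  also have "\<dots> = (\<integral>\<^sup>+\<omega>. indicator (S -` {w. \<delta> \<le> \<bar>w - 1\<bar>} \<inter> space P) \<omega> \<partial>P)"
    using Smeas Aset by (intro nn_integral_indicator[symmetric]) (auto intro: measurable_sets)
  also have "\<dots> \<le> (\<integral>\<^sup>+\<omega>. ennreal (G \<omega>) \<partial>P)"
  proof (rule nn_integral_mono)
    fix \<omega> assume "\<omega> \<in> space P"
    show "indicator (S -` {w. \<delta> \<le> \<bar>w - 1\<bar>} \<inter> space P) \<omega> \<le> ennreal (G \<omega>)"
    proof (cases "\<delta> \<le> \<bar>S \<omega> - 1\<bar>")
      case False then show ?thesis by (simp add: indicator_def)
    next
      case True
      have sum_eq: "(\<Sum>k\<in>I. \<omega> k) = (\<Sum>k\<in>I. Z k \<omega>) + (\<Sum>k\<in>I. D (\<omega> k)) + N * m"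
        using I by (simp add: Z_def D_def sum.distrib[symmetric] sum_subtractf)
      have Seq: "S \<omega> - 1 = (\<Sum>k\<in>I. Z k \<omega>) / N + (\<Sum>k\<in>I. D (\<omega> k)) / N + (m - 1)"
        using N unfolding S_def I_def[symmetric] sum_eq by (simp add: field_simps)
      have "\<bar>(\<Sum>k\<in>I. D (\<omega> k)) / N\<bar> \<le> (\<Sum>k\<in>I. \<bar>D (\<omega> k)\<bar>) / N"
        using N by (simp add: divide_right_mono sum_abs)
      then have "\<delta> \<le> \<bar>(\<Sum>k\<in>I. Z k \<omega>) / N\<bar> + (\<Sum>k\<in>I. \<bar>D (\<omega> k)\<bar>) / N + e"
        using True Seq m1 by linarith
      then have "1 \<le> 9/\<delta>^2 * ((\<Sum>k\<in>I. Z k \<omega>) / N)^2 + 3/\<delta> * ((\<Sum>k\<in>I. \<bar>D (\<omega> k)\<bar>) / N)"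
        by (intro key_ineq) (use \<delta> e in \<open>auto intro: sum_nonneg\<close>)
      then have "1 \<le> G \<omega>" by (simp add: G_def power_divide)
      then show ?thesis by (simp add: indicator_def)
    qed
  qed
  also have "\<dots> = ennreal (\<integral>\<omega>. G \<omega> \<partial>P)"
    by (rule nn_integral_eq_integral[OF intG], intro AE_I2, unfold G_def)
       (use \<delta> in \<open>intro add_nonneg_nonneg mult_nonneg_nonneg divide_nonneg_nonneg sum_nonneg, auto\<close>)
  also have "\<dots> \<le> ennreal (9*K^2/(N*\<delta>^2) + 3*e/\<delta>)" using EG by (rule ennreal_leI)
  finally show ?thesis .
qed

lemma dyadic_term:
  fixes \<epsilon> p \<beta> M :: real and j :: nat
  assumes \<epsilon>: "0 < \<epsilon>" "\<epsilon> \<le> 1" and p: "0 < p" "p \<le> 1" "p \<le> \<beta>/2" and M: "M \<ge> 0"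
  shows "(\<epsilon> * (1/2)^j / 2) powr (-p) * (M * (\<epsilon> * (1/2)^j) powr \<beta>)
         \<le> 2 * M * \<epsilon> powr (\<beta>/2) * ((1/2) powr (\<beta>/2))^j"
proof -
  define a where "a = \<epsilon> * (1/2::real)^j"
  have a0: "0 < a" "a \<le> 1" using \<epsilon> by (auto simp: a_def intro!: mult_le_one power_le_one)
  have "(a / 2) powr (-p) = 2 powr p * a powr (-p)"
    using a0 by (simp add: powr_divide powr_minus field_simps)
  also have "2 powr p \<le> 2" using powr_mono[of p 1 2] p by simp
  finally have 1: "(a / 2) powr (-p) \<le> 2 * a powr (-p)" by (simp add: mult_right_mono)
  have "a powr (-p) * a powr \<beta> = a powr (\<beta> - p)" by (simp add: powr_add[symmetric])
  also have "\<dots> \<le> a powr (\<beta>/2)" using a0 p by (intro powr_mono') auto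
  also have "a powr (\<beta>/2) = \<epsilon> powr (\<beta>/2) * ((1/2) powr (\<beta>/2))^j"
  proof -
    have "((1/2::real)^j) powr (\<beta>/2) = ((1/2) powr (\<beta>/2))^j"
      by (simp add: powr_power powr_realpow[symmetric] powr_powr mult.commute)
    then show ?thesis unfolding a_def using \<epsilon> by (simp add: powr_mult)
  qed
  finally have 2: "a powr (-p) * a powr \<beta> \<le> \<epsilon> powr (\<beta>/2) * ((1/2) powr (\<beta>/2))^j" .
  have "(a/2) powr (-p) * (M * a powr \<beta>) = M * ((a/2) powr (-p) * a powr \<beta>)" by simp
  also have "\<dots> \<le> M * (2 * a powr (-p) * a powr \<beta>)"
    using 1 M by (intro mult_left_mono mult_right_mono) auto
  also have "\<dots> = 2 * M * (a powr (-p) * a powr \<beta>)" by simp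
  also have "\<dots> \<le> 2 * M * (\<epsilon> powr (\<beta>/2) * ((1/2) powr (\<beta>/2))^j)"
    using 2 M by (intro mult_left_mono) auto
  finally show ?thesis unfolding a_def by simp
qed

lemma dyadic_bound:
  fixes Q :: "real measure" and \<epsilon> p \<beta> M :: real
  assumes Q: "prob_space Q" and sQ: "sets Q = sets borel"
    and \<epsilon>: "0 < \<epsilon>" "\<epsilon> \<le> 1" and p: "0 < p" "p \<le> 1" "p \<le> \<beta>/2" and \<beta>: "\<beta> > 0" and M: "M \<ge> 0"
    and bnd: "\<And>w. 0 < w \<Longrightarrow> w \<le> \<epsilon> \<Longrightarrow> emeasure Q {..w} \<le> ennreal (M * w powr \<beta>)"
  shows "(\<integral>\<^sup>+w. ennreal (w powr (-p) * indicator {0<..\<epsilon>} w) \<partial>Q)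
         \<le> ennreal (2 * M * \<epsilon> powr (\<beta>/2) / (1 - (1/2) powr (\<beta>/2)))"
proof -
  interpret prob_space Q by fact
  have mQ: "borel_measurable Q = borel_measurable borel" by (rule measurable_cong_sets[OF sQ refl])
  have sQ': "\<And>A. A \<in> sets borel \<Longrightarrow> A \<in> sets Q" using sQ by simp
  define a where "a j = \<epsilon> * (1/2::real)^j" for j :: nat
  have a0: "0 < a j" "a j \<le> \<epsilon>" for j using \<epsilon> by (auto simp: a_def intro!: mult_left_le power_le_one)
  define T where "T j w = ennreal ((a j / 2) powr (-p)) * indicator {..a j} w" for j w
  have Tm: "T j \<in> borel_measurable Q" for j unfolding T_def mQ by measurable
  have pw: "ennreal (w powr (-p) * indicator {0<..\<epsilon>} w) \<le> (\<Sum>j. T j w)" for w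
  proof (cases "0 < w \<and> w \<le> \<epsilon>")
    case False then show ?thesis by (auto simp: indicator_def)
  next
    case True
    then have "\<exists>n. (1/2::real)^n < w/\<epsilon>" using \<epsilon> by (intro real_arch_pow_inv) auto
    then have ex: "\<exists>n. a n < w" using \<epsilon> by (simp add: a_def field_simps)
    define n where "n = (LEAST n. a n < w)"
    have an: "a n < w" unfolding n_def by (rule LeastI_ex[OF ex])
    have "n \<noteq> 0" proof assume "n = 0" then show False using an True by (simp add: a_def) qed
    then obtain j where nj: "n = Suc j" by (cases n) auto
    have "\<not> a j < w" using nj n_def by (metis lessI not_less_Least)
    then have wj: "w \<le> a j" by simp
    have aS: "a (Suc j) = a j / 2" by (simp add: a_def)
    have "w powr (-p) \<le> (a j / 2) powr (-p)"
      using an aS nj a0[of j] p by (intro powr_mono2') auto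
    then have "ennreal (w powr (-p) * indicator {0<..\<epsilon>} w) \<le> T j w"
      using True wj by (auto simp: T_def indicator_def intro: ennreal_leI)
    also have "T j w \<le> (\<Sum>j. T j w)"
      using sum_le_suminf[of "\<lambda>j. T j w" "{j}"] by auto
    finally show ?thesis .
  qed
  define r where "r = (1/2::real) powr (\<beta>/2)"
  have "1 < (2::real) powr (\<beta>/2)" using powr_less_mono[of 0 "\<beta>/2" 2] \<beta> by simp
  then have r: "0 < r" "r < 1" unfolding r_def by (auto simp: powr_divide)
  define c where "c j = 2 * M * \<epsilon> powr (\<beta>/2) * r^j" for j
  have csum: "c sums (2 * M * \<epsilon> powr (\<beta>/2) / (1 - r))"
    unfolding c_def using sums_mult[OF geometric_sums[of r], of "2 * M * \<epsilon> powr (\<beta>/2)"] r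
    by (simp add: field_simps)
  have "(\<integral>\<^sup>+w. ennreal (w powr (-p) * indicator {0<..\<epsilon>} w) \<partial>Q) \<le> (\<integral>\<^sup>+w. (\<Sum>j. T j w) \<partial>Q)"
    by (intro nn_integral_mono pw)
  also have "\<dots> = (\<Sum>j. \<integral>\<^sup>+w. T j w \<partial>Q)" by (rule nn_integral_suminf[OF Tm])
  also have "\<dots> = (\<Sum>j. ennreal ((a j / 2) powr (-p)) * emeasure Q {..a j})"
    unfolding T_def by (subst nn_integral_cmult_indicator) (auto intro: sQ')
  also have "\<dots> \<le> (\<Sum>j. ennreal (c j))"
  proof (intro suminf_le allI)
    fix j
    have "ennreal ((a j / 2) powr (-p)) * emeasure Q {..a j} \<le> ennreal ((a j / 2) powr (-p)) * ennreal (M * a j powr \<beta>)"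
      using bnd[OF a0] by (intro mult_left_mono) auto
    also have "\<dots> = ennreal ((a j / 2) powr (-p) * (M * a j powr \<beta>))" using M by (simp add: ennreal_mult)
    also have "\<dots> \<le> ennreal (c j)"
      using dyadic_term[OF \<epsilon> p M, of j] by (intro ennreal_leI) (simp add: a_def c_def r_def)
    finally show "ennreal ((a j / 2) powr (-p)) * emeasure Q {..a j} \<le> ennreal (c j)" .
  qed auto
  also have "\<dots> = ennreal (2 * M * \<epsilon> powr (\<beta>/2) / (1 - r))"
    using csum M r by (subst suminf_ennreal2) (auto simp: c_def sums_iff)
  finally show ?thesis by (simp add: r_def)
qed

definition Ffun :: "real \<Rightarrow> real \<Rightarrow> real \<Rightarrow> real \<Rightarrow> ennreal" where
  "Ffun p t w0 w = (if 0 < w then ennreal (w powr (-p)) else \<top>) * ennreal (exp (t * (w0 - w)))"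

lemma F_bound:
  fixes Q :: "real measure" and p t w0 \<epsilon> A :: real
  assumes Q: "prob_space Q" and sQ: "sets Q = sets borel" and pos: "AE w in Q. 0 < w"
    and p: "p > 0" and t: "t > 0" and \<epsilon>: "0 < \<epsilon>" and A: "A \<ge> 0"
    and dy: "(\<integral>\<^sup>+w. ennreal (w powr (-p) * indicator {0<..\<epsilon>} w) \<partial>Q) \<le> ennreal A"
  shows "(\<integral>\<^sup>+w. Ffun p t w0 w \<partial>Q) \<le> ennreal (exp (t*w0) * (A + \<epsilon> powr (-p) * exp (-t*\<epsilon>)))"
proof -
  interpret prob_space Q by fact
  have mQ: "borel_measurable Q = borel_measurable borel" by (rule measurable_cong_sets[OF sQ refl])
  define d where "d = \<epsilon> powr (-p) * exp (-t*\<epsilon>)"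
  have d0: "d \<ge> 0" by (simp add: d_def)
  define g where "g w = w powr (-p) * indicator {0<..\<epsilon>} w" for w :: real
  have g0: "g w \<ge> 0" for w by (simp add: g_def)
  have pw: "Ffun p t w0 w \<le> ennreal (exp (t*w0)) * (ennreal (g w) + ennreal d)" if w: "0 < w" for w
  proof -
    have "Ffun p t w0 w = ennreal (w powr (-p) * exp (t * (w0 - w)))"
      using w by (simp add: Ffun_def ennreal_mult)
    also have "w powr (-p) * exp (t * (w0 - w)) \<le> exp (t*w0) * (g w + d)"
    proof (cases "w \<le> \<epsilon>")
      case True
      have "exp (t * (w0 - w)) \<le> exp (t*w0)" using t w by (simp add: algebra_simps)
      then have "w powr (-p) * exp (t * (w0 - w)) \<le> w powr (-p) * exp (t*w0)"
        by (intro mult_left_mono) auto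
      also have "\<dots> \<le> exp (t*w0) * (g w + d)" using True w d0 by (simp add: g_def algebra_simps)
      finally show ?thesis .
    next
      case False
      have 1: "w powr (-p) \<le> \<epsilon> powr (-p)" using False \<epsilon> p by (intro powr_mono2') auto
      have 2: "exp (t * (w0 - w)) \<le> exp (t*w0) * exp (-t*\<epsilon>)"
        using False t by (simp add: exp_add[symmetric] algebra_simps)
      have "w powr (-p) * exp (t * (w0 - w)) \<le> \<epsilon> powr (-p) * (exp (t*w0) * exp (-t*\<epsilon>))"
        using 1 2 by (intro mult_mono) auto
      also have "\<dots> = exp (t*w0) * (g w + d)" using False by (simp add: g_def d_def)
      finally show ?thesis .
    qed
    then have "ennreal (w powr (-p) * exp (t * (w0 - w))) \<le> ennreal (exp (t*w0) * (g w + d))"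
      by (rule ennreal_leI)
    also have "\<dots> = ennreal (exp (t*w0)) * (ennreal (g w) + ennreal d)"
      using g0 d0 by (simp add: ennreal_mult ennreal_plus)
    finally show ?thesis .
  qed
  have gm: "(\<lambda>w. ennreal (g w)) \<in> borel_measurable Q" unfolding mQ g_def by measurable
  have "(\<integral>\<^sup>+w. Ffun p t w0 w \<partial>Q) \<le> (\<integral>\<^sup>+w. ennreal (exp (t*w0)) * (ennreal (g w) + ennreal d) \<partial>Q)"
    using pos by (intro nn_integral_mono_AE) (auto elim!: eventually_mono intro: pw)
  also have "\<dots> = ennreal (exp (t*w0)) * ((\<integral>\<^sup>+w. ennreal (g w) \<partial>Q) + ennreal d)"
    using gm by (simp add: nn_integral_cmult nn_integral_add emeasure_space_1)
  also have "\<dots> \<le> ennreal (exp (t*w0)) * (ennreal A + ennreal d)"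
    using dy by (intro mult_left_mono add_right_mono) (auto simp: g_def)
  also have "\<dots> = ennreal (exp (t*w0) * (A + d))" using A d0 by (simp add: ennreal_mult ennreal_plus)
  finally show ?thesis by (simp add: d_def)
qed

lemma Ffun_meas: "Ffun p t w0 \<in> borel_measurable borel"
  unfolding Ffun_def by measurable

lemma Ffun_nz: "Ffun p t w0 w \<noteq> 0"
  by (simp add: Ffun_def powr_def)

lemma small_pw:
  fixes \<omega> :: "nat \<Rightarrow> real" and N :: nat and t w0 :: real
  assumes N: "N \<ge> 1" and t: "t \<ge> 0"
  shows "ennreal (1 / ((\<Sum>k\<in>{1..N}. \<omega> k) / real N)) * indicator {..<w0} ((\<Sum>k\<in>{1..N}. \<omega> k) / real N)
         \<le> (\<Prod>k\<in>{1..N}. Ffun (1/N) t w0 (\<omega> k))"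
proof -
  define I where "I = {1..N}"
  have I: "finite I" "card I = N" "I \<noteq> {}" using N by (auto simp: I_def)
  define S where "S = (\<Sum>k\<in>I. \<omega> k) / real N"
  define p where "p = 1 / real N"
  have main: "ennreal (1 / S) * indicator {..<w0} S \<le> (\<Prod>k\<in>I. Ffun p t w0 (\<omega> k))"
  proof (cases "\<exists>k\<in>I. \<omega> k \<le> 0")
    case True
    then obtain k where k: "k \<in> I" "\<omega> k \<le> 0" by auto
    have "Ffun p t w0 (\<omega> k) = \<top>" using k by (simp add: Ffun_def ennreal_mult_top)
    then have "(\<Prod>k\<in>I. Ffun p t w0 (\<omega> k)) = \<top>"
      using k I Ffun_nz by (subst ennreal_prod_eq_top) auto
    then show ?thesis by simp
  next
    case False
    then have pos: "\<And>k. k \<in> I \<Longrightarrow> 0 < \<omega> k" by auto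
    show ?thesis
    proof (cases "S < w0")
      case False then show ?thesis by (simp add: indicator_def)
    next
      case True
      have Fk: "Ffun p t w0 (\<omega> k) = ennreal (\<omega> k powr (-p) * exp (t * (w0 - \<omega> k)))" if "k \<in> I" for k
        using pos[OF that] by (simp add: Ffun_def ennreal_mult)
      have "(\<Prod>k\<in>I. Ffun p t w0 (\<omega> k)) = (\<Prod>k\<in>I. ennreal (\<omega> k powr (-p) * exp (t * (w0 - \<omega> k))))"
        using Fk by (rule prod.cong[OF refl])
      also have "\<dots> = ennreal (\<Prod>k\<in>I. \<omega> k powr (-p) * exp (t * (w0 - \<omega> k)))"
        by (rule prod_ennreal) auto
      finally have eq: "(\<Prod>k\<in>I. Ffun p t w0 (\<omega> k)) = ennreal ((\<Prod>k\<in>I. \<omega> k powr (-p)) * (\<Prod>k\<in>I. exp (t * (w0 - \<omega> k))))"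
        by (simp add: prod.distrib)
      have P0: "0 < (\<Prod>k\<in>I. \<omega> k)" using pos by (intro prod_pos) auto
      have amgm: "(\<Prod>k\<in>I. \<omega> k) powr (1 / card I) \<le> (\<Sum>k\<in>I. \<omega> k / card I)"
        using pos I by (intro arith_geom_mean) (auto intro: less_imp_le)
      then have amgm': "(\<Prod>k\<in>I. \<omega> k) powr p \<le> S"
        using I by (simp add: S_def p_def sum_divide_distrib)
      have gp: "0 < (\<Prod>k\<in>I. \<omega> k) powr p" using P0 by simp
      have S0: "0 < S" using gp amgm' by linarith
      have "1 / S \<le> 1 / (\<Prod>k\<in>I. \<omega> k) powr p"
        by (rule divide_left_mono) (use amgm' gp S0 in auto)
      also have "\<dots> = (\<Prod>k\<in>I. \<omega> k) powr (-p)"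
        by (simp add: powr_minus_divide)
      also have "\<dots> = (\<Prod>k\<in>I. \<omega> k powr (-p))"
        by (rule prod_powr_distrib)
      finally have 1: "1 / S \<le> (\<Prod>k\<in>I. \<omega> k powr (-p))" .
      have "(\<Prod>k\<in>I. exp (t * (w0 - \<omega> k))) = exp (\<Sum>k\<in>I. t * (w0 - \<omega> k))"
        using I by (simp add: exp_sum)
      also have "(\<Sum>k\<in>I. t * (w0 - \<omega> k)) = t * (N * w0 - N * S)"
        using I N by (simp add: S_def sum_distrib_left[symmetric] sum_subtractf)
      finally have B1: "1 \<le> (\<Prod>k\<in>I. exp (t * (w0 - \<omega> k)))" using True t N by simp
      have A0: "0 \<le> (\<Prod>k\<in>I. \<omega> k powr (-p))" by (simp add: prod_nonneg)
      have "(\<Prod>k\<in>I. \<omega> k powr (-p)) * 1 \<le> (\<Prod>k\<in>I. \<omega> k powr (-p)) * (\<Prod>k\<in>I. exp (t * (w0 - \<omega> k)))"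
        using A0 B1 by (rule mult_left_mono[rotated])
      then have "1 / S \<le> (\<Prod>k\<in>I. \<omega> k powr (-p)) * (\<Prod>k\<in>I. exp (t * (w0 - \<omega> k)))"
        using 1 by linarith
      then show ?thesis unfolding eq using True by (simp add: indicator_def ennreal_leI)
    qed
  qed
  then show ?thesis by (simp add: I_def S_def p_def)
qed

lemma S_meas:
  fixes Q :: "real measure"
  assumes sQ: "sets Q = sets borel"
  shows "(\<lambda>\<omega>. (\<Sum>k\<in>{1..N}. \<omega> k) / real N) \<in> borel_measurable (PiM {1..N} (\<lambda>_::nat. Q))"
proof -
  have sP: "sets (PiM {1..N} (\<lambda>_::nat. Q)) = sets (PiM {1..N} (\<lambda>_::nat. (borel::real measure)))"
    using sQ by (intro sets_PiM_cong) auto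
  show ?thesis unfolding measurable_cong_sets[OF sP refl] by measurable
qed

lemma mean_law_prob:
  fixes Q :: "real measure"
  assumes Q: "prob_space Q" and sQ: "sets Q = sets borel"
  shows "prob_space (mean_law Q N)"
proof -
  interpret P: prob_space "PiM {1..N} (\<lambda>_::nat. Q)" by (intro prob_space_PiM) (simp add: Q)
  show ?thesis unfolding mean_law_def by (rule P.prob_space_distr[OF S_meas[OF sQ]])
qed

lemma W2_upper_single:
  fixes Q :: "real measure" and N :: nat and \<delta> w0 t :: real
  assumes Q: "prob_space Q" and sQ: "sets Q = sets borel" and N: "N \<ge> 1"
    and \<delta>: "0 < \<delta>" "\<delta> < 1" and w0: "0 < w0" "w0 \<le> 1 - \<delta>" and t: "t \<ge> 0"
  shows "(\<integral>\<^sup>+w. ennreal (1/w) \<partial>mean_law Q N)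
     \<le> ennreal (1/(1-\<delta>)) + ennreal (1/w0) * emeasure (mean_law Q N) {w. \<delta> \<le> \<bar>w - 1\<bar>}
        + (\<integral>\<^sup>+w. Ffun (1/N) t w0 w \<partial>Q) ^ N"
proof -
  define P where "P = PiM {1..N} (\<lambda>_::nat. Q)"
  define S where "S \<omega> = (\<Sum>k\<in>{1..N}. \<omega> k) / real N" for \<omega> :: "nat \<Rightarrow> real"
  define L where "L = mean_law Q N"
  have LP: "L = distr P borel S" unfolding L_def mean_law_def P_def S_def by simp
  have Smeas: "S \<in> borel_measurable P" unfolding P_def S_def by (rule S_meas[OF sQ])
  interpret L: prob_space L unfolding L_def by (rule mean_law_prob[OF Q sQ])
  have sL: "sets L = sets borel" unfolding LP by simp
  have mL: "borel_measurable L = borel_measurable borel" by (rule measurable_cong_sets[OF sL refl])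
  define A where "A = {w::real. \<delta> \<le> \<bar>w - 1\<bar>}"
  have Aset: "A \<in> sets L" unfolding sL A_def by measurable
  have pw: "ennreal (1/w) \<le> ennreal (1/(1-\<delta>)) + (ennreal (1/w0) * indicator A w + ennreal (1/w) * indicator {..<w0} w)" for w
  proof (cases "w < w0")
    case True then show ?thesis by (simp add: indicator_def)
  next
    case False
    show ?thesis
    proof (cases "w \<ge> 1 - \<delta>")
      case True
      then have "1/w \<le> 1/(1-\<delta>)" using \<delta> by (intro divide_left_mono) auto
      then have "ennreal (1/w) \<le> ennreal (1/(1-\<delta>))" by (rule ennreal_leI)
      then show ?thesis by (rule order_trans) simp
    next
      case False2: False
      then have "w \<in> A" using \<delta> unfolding A_def by auto
      have "1/w \<le> 1/w0" using False w0 by (intro divide_left_mono) auto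
      then have "ennreal (1/w) \<le> ennreal (1/w0) * indicator A w" using \<open>w \<in> A\<close> by (simp add: ennreal_leI)
      then show ?thesis by (rule order_trans) (simp add: add_increasing)
    qed
  qed
  have "(\<integral>\<^sup>+w. ennreal (1/w) \<partial>L) \<le> (\<integral>\<^sup>+w. ennreal (1/(1-\<delta>)) + (ennreal (1/w0) * indicator A w + ennreal (1/w) * indicator {..<w0} w) \<partial>L)"
    by (intro nn_integral_mono pw)
  also have "\<dots> = (\<integral>\<^sup>+w. ennreal (1/(1-\<delta>)) \<partial>L) + (\<integral>\<^sup>+w. (ennreal (1/w0) * indicator A w + ennreal (1/w) * indicator {..<w0} w) \<partial>L)"
    by (rule nn_integral_add) (unfold mL A_def, measurable)
  also have "(\<integral>\<^sup>+w. (ennreal (1/w0) * indicator A w + ennreal (1/w) * indicator {..<w0} w) \<partial>L)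
     = (\<integral>\<^sup>+w. ennreal (1/w0) * indicator A w \<partial>L) + (\<integral>\<^sup>+w. ennreal (1/w) * indicator {..<w0} w \<partial>L)"
    by (rule nn_integral_add) (unfold mL A_def, measurable)
  also have "(\<integral>\<^sup>+w. ennreal (1/w0) * indicator A w \<partial>L) = ennreal (1/w0) * emeasure L A"
    by (rule nn_integral_cmult_indicator[OF Aset])
  also have "(\<integral>\<^sup>+w. ennreal (1/(1-\<delta>)) \<partial>L) = ennreal (1/(1-\<delta>))"
    by (simp add: L.emeasure_space_1)
  also have "(\<integral>\<^sup>+w. ennreal (1/w) * indicator {..<w0} w \<partial>L) = (\<integral>\<^sup>+\<omega>. ennreal (1 / S \<omega>) * indicator {..<w0} (S \<omega>) \<partial>P)"
    unfolding LP by (rule nn_integral_distr[OF Smeas]) measurable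
  also have "\<dots> \<le> (\<integral>\<^sup>+\<omega>. (\<Prod>k\<in>{1..N}. Ffun (1/N) t w0 (\<omega> k)) \<partial>P)"
    unfolding S_def by (intro nn_integral_mono small_pw N t)
  also have "\<dots> = (\<Prod>k\<in>{1..N}. \<integral>\<^sup>+w. Ffun (1/N) t w0 w \<partial>Q)"
    unfolding P_def
    by (rule prodQ_nn[OF Q]) (auto simp: measurable_cong_sets[OF sQ refl] Ffun_meas)
  also have "\<dots> = (\<integral>\<^sup>+w. Ffun (1/N) t w0 w \<partial>Q) ^ N" by simp
  finally show ?thesis unfolding L_def A_def by (simp add: add.assoc)
qed

lemma W2_lower_single:
  fixes Q :: "real measure" and N :: nat and \<delta> :: real
  assumes Q: "prob_space Q" and sQ: "sets Q = sets borel" and \<delta>: "0 < \<delta>" "\<delta> < 1"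
  shows "ennreal (1/(1+\<delta>)) * (1 - emeasure (mean_law Q N) {w. \<delta> \<le> \<bar>w - 1\<bar>}) \<le> (\<integral>\<^sup>+w. ennreal (1/w) \<partial>mean_law Q N)"
proof -
  define L where "L = mean_law Q N"
  interpret L: prob_space L unfolding L_def by (rule mean_law_prob[OF Q sQ])
  have sL: "sets L = sets borel" unfolding L_def mean_law_def by simp
  have spL: "space L = UNIV" by (metis sL sets_eq_imp_space_eq space_borel)
  define A where "A = {w::real. \<delta> \<le> \<bar>w - 1\<bar>}"
  have Aset: "A \<in> sets L" unfolding sL A_def by measurable
  have B: "{w. \<bar>w - 1\<bar> < \<delta>} = space L - A" unfolding spL A_def by auto
  have "emeasure L (space L - A) = 1 - emeasure L A"
    using Aset by (simp add: emeasure_compl L.emeasure_space_1)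
  then have "ennreal (1/(1+\<delta>)) * (1 - emeasure L A) = (\<integral>\<^sup>+w. ennreal (1/(1+\<delta>)) * indicator (space L - A) w \<partial>L)"
    using Aset by (simp add: nn_integral_cmult_indicator)
  also have "\<dots> \<le> (\<integral>\<^sup>+w. ennreal (1/w) \<partial>L)"
  proof (intro nn_integral_mono)
    fix w assume "w \<in> space L"
    show "ennreal (1/(1+\<delta>)) * indicator (space L - A) w \<le> ennreal (1/w)"
    proof (cases "w \<in> space L - A")
      case True
      then have "\<bar>w - 1\<bar> < \<delta>" using B by auto
      then have "1/(1+\<delta>) \<le> 1/w" using \<delta> by (intro divide_left_mono) auto
      then show ?thesis using True by (simp add: ennreal_leI)
    qed simp
  qed
  finally show ?thesis unfolding L_def A_def .
qed

lemma ennreal_pos_real: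
  assumes "0 < (a::ennreal)"
  obtains r where "0 < r" "ennreal r < a"
proof -
  obtain b where b: "0 < b" "b < a" using dense[OF assms] by blast
  have "b < \<top>" by (rule less_le_trans[OF b(2) top_greatest])
  then have "b \<noteq> \<top>" by simp
  then obtain r where "b = ennreal r" "r \<ge> 0" using ennreal_cases by metis
  with b show ?thesis using that by auto
qed

lemma part1:
  fixes Q :: "'x \<Rightarrow> real measure"
  assumes prob: "\<And>x. prob_space (Q x)"
    and sets: "\<And>x. sets (Q x) = sets borel"
    and pos: "\<And>x. AE w in Q x. 0 < w"
    and int: "\<And>x. integrable (Q x) (\<lambda>w. w)"
    and mean1: "\<And>x. (\<integral>w. w \<partial>Q x) = 1"
    and W3: "W3 Q"
  shows "W1 Q"
  unfolding W1_def
proof (intro allI impI)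
  fix \<delta> :: real assume \<delta>: "\<delta> > 0"
  show "(\<lambda>N. SUP x. emeasure (mean_law (Q x) N) {w. \<bar>w - 1\<bar> \<ge> \<delta>}) \<longlonglongrightarrow> 0"
  proof (rule order_tendstoI)
    fix a :: ennreal assume "a < 0" then show "eventually (\<lambda>N. a < (SUP x. emeasure (mean_law (Q x) N) {w. \<bar>w - 1\<bar> \<ge> \<delta>})) sequentially"
      by simp
  next
    fix a :: ennreal assume "0 < a"
    then obtain r where r: "0 < r" "ennreal r < a" by (rule ennreal_pos_real)
    define e where "e = min (\<delta>/3) (r*\<delta>/6)"
    have e: "0 < e" "e \<le> \<delta>/3" "3*e/\<delta> \<le> r/2" using \<delta> r by (auto simp: e_def field_simps)
    have "eventually (\<lambda>K. (SUP x. \<integral>\<^sup>+ w. ennreal (w * indicator {K<..} w) \<partial>(Q x)) < ennreal e) at_top"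
      using W3 e(1) unfolding W3_def by (intro order_tendstoD(2)) auto
    then obtain K0 where K0: "\<And>K. K \<ge> K0 \<Longrightarrow> (SUP x. \<integral>\<^sup>+ w. ennreal (w * indicator {K<..} w) \<partial>(Q x)) < ennreal e"
      unfolding eventually_at_top_linorder by blast
    define K where "K = max K0 1"
    have K: "K > 0" "K \<ge> K0" by (auto simp: K_def)
    have eK: "(\<integral>\<^sup>+ w. ennreal (w * indicator {K<..} w) \<partial>(Q x)) \<le> ennreal e" for x
      using K0[OF K(2)] by (meson SUP_upper UNIV_I less_imp_le order_trans)
    define N1 where "N1 = nat \<lceil>18*K^2/(r*\<delta>^2)\<rceil> + 1"
    show "eventually (\<lambda>N. (SUP x. emeasure (mean_law (Q x) N) {w. \<bar>w - 1\<bar> \<ge> \<delta>}) < a) sequentially"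
      unfolding eventually_sequentially
    proof (intro exI allI impI)
      fix N assume N: "N1 \<le> N"
      then have N1: "N \<ge> 1" by (simp add: N1_def)
      have "18*K^2/(r*\<delta>^2) < N" using N unfolding N1_def by linarith
      then have "18*K^2 < N * (r*\<delta>^2)" using r \<delta> by (simp add: field_simps)
      then have b1: "9*K^2/(N*\<delta>^2) < r/2" using N1 \<delta> by (simp add: field_simps)
      have "(SUP x. emeasure (mean_law (Q x) N) {w. \<bar>w - 1\<bar> \<ge> \<delta>}) \<le> ennreal (9*K^2/(N*\<delta>^2) + 3*e/\<delta>)"
        by (intro SUP_least W1_bound[OF prob sets pos int mean1 \<delta> K(1) N1 eK]) (use e in auto)
      also have "\<dots> < ennreal r" using b1 e r by (intro ennreal_lessI) auto
      also have "\<dots> < a" by (rule r)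
      finally show "(SUP x. emeasure (mean_law (Q x) N) {w. \<bar>w - 1\<bar> \<ge> \<delta>}) < a" .
    qed
  qed
qed

lemma part2_params:
  fixes \<beta> \<gamma> M :: real
  assumes \<beta>: "\<beta> > 0" and \<gamma>: "0 < \<gamma>" "\<gamma> < 1" and M: "M \<ge> 0"
  obtains \<epsilon> where "0 < \<epsilon>" "\<epsilon> < \<gamma>" "\<epsilon> \<le> 1"
    "2 * M * \<epsilon> powr (\<beta>/2) / (1 - (1/2) powr (\<beta>/2)) \<le> 1/8"
proof -
  define r2 where "r2 = (1/2::real) powr (\<beta>/2)"
  have "1 < (2::real) powr (\<beta>/2)" using powr_less_mono[of 0 "\<beta>/2" 2] \<beta> by simp
  then have r2: "0 < r2" "r2 < 1" unfolding r2_def by (auto simp: powr_divide)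
  define c0 where "c0 = 2 * M / (1 - r2)"
  have c0: "c0 \<ge> 0" using M r2 by (simp add: c0_def)
  define y where "y = (1 / (8 * (c0 + 1))) powr (2/\<beta>)"
  have y: "y > 0" using c0 by (simp add: y_def)
  define \<epsilon> where "\<epsilon> = min (\<gamma>/2) y"
  have \<epsilon>: "0 < \<epsilon>" "\<epsilon> < \<gamma>" "\<epsilon> \<le> 1" using \<gamma> y by (auto simp: \<epsilon>_def)
  have "\<epsilon> powr (\<beta>/2) \<le> y powr (\<beta>/2)" using \<epsilon> \<beta> by (intro powr_mono2) (auto simp: \<epsilon>_def)
  also have "y powr (\<beta>/2) = 1 / (8 * (c0 + 1))" using \<beta> c0 by (simp add: y_def powr_powr)
  finally have "c0 * \<epsilon> powr (\<beta>/2) \<le> c0 * (1 / (8 * (c0 + 1)))" using c0 by (intro mult_left_mono)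
  also have "\<dots> \<le> 1/8" using c0 by (simp add: field_simps)
  finally have "2 * M * \<epsilon> powr (\<beta>/2) / (1 - r2) \<le> 1/8" by (simp add: c0_def)
  then show ?thesis using that \<epsilon> by (simp add: r2_def)
qed

lemma part2:
  fixes Q :: "'x \<Rightarrow> real measure"
  assumes prob: "\<And>x. prob_space (Q x)"
    and sets: "\<And>x. sets (Q x) = sets borel"
    and pos: "\<And>x. AE w in Q x. 0 < w"
    and W1: "W1 Q" and W4: "W4 Q"
  shows "W2 Q"
proof -
  obtain \<gamma> M0 \<beta> where \<gamma>: "0 < \<gamma>" "\<gamma> < 1" and \<beta>: "\<beta> > 0"
    and bnd0: "\<And>w. 0 < w \<Longrightarrow> w < \<gamma> \<Longrightarrow> (SUP x. emeasure (Q x) {..w}) \<le> ennreal (M0 * w powr \<beta>)"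
    using W4 unfolding W4_def by blast
  define M where "M = max M0 0"
  have M: "M \<ge> 0" by (simp add: M_def)
  have bnd: "emeasure (Q x) {..w} \<le> ennreal (M * w powr \<beta>)" if "0 < w" "w < \<gamma>" for x w
  proof -
    have "emeasure (Q x) {..w} \<le> (SUP x. emeasure (Q x) {..w})" by (rule SUP_upper) simp
    also have "\<dots> \<le> ennreal (M0 * w powr \<beta>)" by (rule bnd0[OF that])
    also have "\<dots> \<le> ennreal (M * w powr \<beta>)" by (intro ennreal_leI mult_right_mono) (auto simp: M_def)
    finally show ?thesis .
  qed
  obtain \<epsilon> where \<epsilon>: "0 < \<epsilon>" "\<epsilon> < \<gamma>" "\<epsilon> \<le> 1"
    and A8: "2 * M * \<epsilon> powr (\<beta>/2) / (1 - (1/2) powr (\<beta>/2)) \<le> 1/8"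
    using part2_params[OF \<beta> \<gamma> M] by blast
  define A where "A = 2 * M * \<epsilon> powr (\<beta>/2) / (1 - (1/2) powr (\<beta>/2))"
  have "1 < (2::real) powr (\<beta>/2)" using powr_less_mono[of 0 "\<beta>/2" 2] \<beta> by simp
  then have "(1/2::real) powr (\<beta>/2) < 1" by (auto simp: powr_divide)
  then have A0: "A \<ge> 0" using M by (simp add: A_def)
  define t where "t = ln 16 / \<epsilon>"
  have t: "t > 0" using \<epsilon> by (simp add: t_def)
  have et: "exp (-t*\<epsilon>) = 1/16" using \<epsilon> by (simp add: t_def exp_minus)
  define w0 where "w0 = min (1/2) (ln 2 / t)"
  have w0a: "0 < w0" using t by (simp add: w0_def)
  have w0b: "w0 \<le> 1/2" unfolding w0_def by (rule min.cobounded1)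
  note w0 = w0a w0b
  have ew0: "exp (t*w0) \<le> 2"
  proof -
    have "t * w0 \<le> ln 2" using t by (simp add: w0_def field_simps min_def)
    then have "exp (t*w0) \<le> exp (ln 2)" by (simp only: exp_le_cancel_iff)
    then show ?thesis by simp
  qed
  define N0 where "N0 = nat \<lceil>ln (1/\<epsilon>) / ln 2 + 2/\<beta>\<rceil> + 1"
  have lne: "ln (1/\<epsilon>) \<ge> 0" using \<epsilon> by simp
  have Fb: "(\<integral>\<^sup>+w. Ffun (1/N) t w0 w \<partial>Q x) \<le> ennreal (1/2)" if N: "N \<ge> N0" for N x
  proof -
    have NN: "ln (1/\<epsilon>) / ln 2 + 2/\<beta> < real N" using N unfolding N0_def by linarith
    have N1: "N \<ge> 1" using N by (simp add: N0_def)
    define p where "p = 1 / real N"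
    have p: "0 < p" "p \<le> 1" using N1 by (auto simp: p_def)
    have "2/\<beta> \<le> real N" using NN lne by (smt (verit) divide_nonneg_nonneg ln_ge_zero)
    then have pb: "p \<le> \<beta>/2" using \<beta> N1 by (simp add: p_def field_simps)
    have "ln (1/\<epsilon>) / ln 2 \<le> real N" using NN \<beta> by (smt (verit) divide_pos_pos)
    then have "ln (1/\<epsilon>) \<le> real N * ln 2" by (simp add: field_simps)
    then have "p * ln (1/\<epsilon>) \<le> ln 2" using N1 by (simp add: p_def field_simps)
    then have "exp (p * ln (1/\<epsilon>)) \<le> 2" by (metis exp_le_cancel_iff exp_ln zero_less_numeral)
    moreover have "\<epsilon> powr (-p) = exp (p * ln (1/\<epsilon>))" using \<epsilon> by (simp add: powr_def ln_div)
    ultimately have ep: "\<epsilon> powr (-p) \<le> 2" by simp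
    have dy: "(\<integral>\<^sup>+w. ennreal (w powr (-p) * indicator {0<..\<epsilon>} w) \<partial>Q x) \<le> ennreal A"
      unfolding A_def using \<epsilon> p pb \<beta> M
      by (intro dyadic_bound[OF prob sets]) (auto intro: bnd)
    have "(\<integral>\<^sup>+w. Ffun p t w0 w \<partial>Q x) \<le> ennreal (exp (t*w0) * (A + \<epsilon> powr (-p) * exp (-t*\<epsilon>)))"
      by (rule F_bound[OF prob sets pos p(1) t \<epsilon>(1) A0 dy])
    also have "exp (t*w0) * (A + \<epsilon> powr (-p) * exp (-t*\<epsilon>)) \<le> 2 * (1/8 + 2 * (1/16))"
      using ew0 A8 ep A0 unfolding et A_def[symmetric]
      by (intro mult_mono add_mono) auto
    finally show ?thesis unfolding p_def by (simp add: ennreal_leI order_trans)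
  qed
  define g where "g N = (SUP x. \<integral>\<^sup>+ w. ennreal (1 / w) \<partial>mean_law (Q x) N)" for N
  define Pd where "Pd \<delta> N = (SUP x. emeasure (mean_law (Q x) N) {w. \<bar>w - 1\<bar> \<ge> \<delta>})" for \<delta> N
  have W1': "eventually (\<lambda>N. Pd \<delta> N < c) sequentially" if "\<delta> > 0" "c > 0" for \<delta> c
    using W1 that unfolding W1_def Pd_def by (intro order_tendstoD(2)) auto
  have upper: "g N \<le> ennreal (1/(1-\<delta>)) + ennreal (1/w0) * Pd \<delta> N + ennreal ((1/2)^N)"
    if N: "N \<ge> N0" and \<delta>: "0 < \<delta>" "\<delta> \<le> 1/2" for N \<delta>
    unfolding g_def
  proof (rule SUP_least)
    fix x
    have N1: "N \<ge> 1" using N by (simp add: N0_def)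
    have "(\<integral>\<^sup>+w. ennreal (1/w) \<partial>mean_law (Q x) N)
       \<le> ennreal (1/(1-\<delta>)) + ennreal (1/w0) * emeasure (mean_law (Q x) N) {w. \<delta> \<le> \<bar>w - 1\<bar>}
        + (\<integral>\<^sup>+w. Ffun (1/N) t w0 w \<partial>Q x) ^ N"
      using \<delta> w0 t by (intro W2_upper_single[OF prob sets N1]) auto
    also have "\<dots> \<le> ennreal (1/(1-\<delta>)) + ennreal (1/w0) * Pd \<delta> N + ennreal ((1/2)^N)"
    proof -
      have "(\<integral>\<^sup>+w. Ffun (1/N) t w0 w \<partial>Q x) ^ N \<le> ennreal (1/2) ^ N"
        by (intro power_mono Fb[OF N]) auto
      also have "ennreal (1/2) ^ N = ennreal ((1/2)^N)" by (rule ennreal_power) simp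
      finally have FN: "(\<integral>\<^sup>+w. Ffun (1/N) t w0 w \<partial>Q x) ^ N \<le> ennreal ((1/2)^N)" .
      show ?thesis unfolding Pd_def
        by (intro add_mono mult_left_mono FN order_refl SUP_upper) auto
    qed
    finally show "(\<integral>\<^sup>+w. ennreal (1/w) \<partial>mean_law (Q x) N) \<le> ennreal (1/(1-\<delta>)) + ennreal (1/w0) * Pd \<delta> N + ennreal ((1/2)^N)" .
  qed
  have lower: "ennreal (1/(1+\<delta>)) * (1 - Pd \<delta> N) \<le> g N" if \<delta>: "0 < \<delta>" "\<delta> < 1" for N \<delta>
  proof -
    have "ennreal (1/(1+\<delta>)) * (1 - Pd \<delta> N) \<le> ennreal (1/(1+\<delta>)) * (1 - emeasure (mean_law (Q undefined) N) {w. \<delta> \<le> \<bar>w - 1\<bar>})"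
      unfolding Pd_def by (intro mult_left_mono ennreal_minus_mono SUP_upper) auto
    also have "\<dots> \<le> (\<integral>\<^sup>+w. ennreal (1/w) \<partial>mean_law (Q undefined) N)"
      by (rule W2_lower_single[OF prob sets \<delta>])
    also have "\<dots> \<le> g N" unfolding g_def by (rule SUP_upper) simp
    finally show ?thesis .
  qed
  show ?thesis
    unfolding W2_def g_def[symmetric]
  proof (rule order_tendstoI)
    fix a :: ennreal assume a: "a < 1"
    have "a < \<top>" using a by (rule less_trans) simp
    then have "a \<noteq> \<top>" by simp
    then obtain ra where ra0: "a = ennreal ra" "0 \<le> ra" using ennreal_cases by metis
    then have ra: "a = ennreal ra" "0 \<le> ra" "ra < 1" using a by auto
    define \<eta> where "\<eta> = (1 - ra) / 4"
    have \<eta>: "0 < \<eta>" "\<eta> < 1" using ra by (auto simp: \<eta>_def)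
    have h: "0 < (1 - ra) * (3 - ra)" using ra by (intro mult_pos_pos) auto
    have key: "ra < (1 - \<eta>) / (1 + \<eta>)" using ra \<eta> h
      by (simp add: \<eta>_def field_simps)
    show "eventually (\<lambda>N. a < g N) sequentially"
    proof -
      have ev: "eventually (\<lambda>N. Pd \<eta> N < ennreal \<eta>) sequentially" using W1' \<eta> by simp
      show ?thesis
      proof (rule eventually_mono[OF ev])
        fix N assume PN: "Pd \<eta> N < ennreal \<eta>"
        have "a < ennreal ((1 - \<eta>) / (1 + \<eta>))" using key ra by (simp add: ennreal_lessI)
        also have "ennreal ((1 - \<eta>) / (1 + \<eta>)) = ennreal (1/(1+\<eta>)) * (1 - ennreal \<eta>)"
          using \<eta> by (simp add: ennreal_mult[symmetric] ennreal_1[symmetric] ennreal_minus del: ennreal_1)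
        also have "\<dots> \<le> ennreal (1/(1+\<eta>)) * (1 - Pd \<eta> N)"
          using PN by (intro mult_left_mono ennreal_minus_mono) auto
        also have "\<dots> \<le> g N" using lower \<eta> by simp
        finally show "a < g N" .
      qed
    qed
  next
    fix a :: ennreal assume a: "1 < a"
    obtain b where b: "1 < b" "b < a" using dense[OF a] by blast
    have "b < \<top>" by (rule less_le_trans[OF b(2) top_greatest])
  then have "b \<noteq> \<top>" by simp
    then obtain rb where rb: "b = ennreal rb" "rb \<ge> 0" using ennreal_cases by metis
    have "ennreal 1 < ennreal rb" using b(1) rb(1) by simp
    then have rb1: "rb > 1" by (subst (asm) ennreal_less_iff) auto
    define s where "s = (1 + rb) / 2"
    have s: "1 < s" "s < rb" using rb1 by (auto simp: s_def)
    define \<delta> where "\<delta> = min (1/2) (1 - 1/s)"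
    have \<delta>: "0 < \<delta>" "\<delta> \<le> 1/2" using s by (auto simp: \<delta>_def field_simps)
    have ds: "1/(1-\<delta>) \<le> s"
    proof -
      have "1/s \<le> 1 - \<delta>" by (simp add: \<delta>_def)
      then show ?thesis using s \<delta> by (simp add: field_simps)
    qed
    define \<eta> where "\<eta> = (rb - s) / 3"
    have \<eta>: "\<eta> > 0" using s by (simp add: \<eta>_def)
    have ev1: "eventually (\<lambda>N. Pd \<delta> N < ennreal (w0 * \<eta>)) sequentially"
      using W1' \<delta> w0 \<eta> by simp
    obtain n where n: "(1/2::real)^n < \<eta>" using real_arch_pow_inv[OF \<eta>, of "1/2"] by auto
    have ev2: "eventually (\<lambda>N. N \<ge> max N0 n) sequentially" by (rule eventually_ge_at_top)
    show "eventually (\<lambda>N. g N < a) sequentially"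
    proof (rule eventually_mono[OF eventually_conj[OF ev1 ev2]])
      fix N assume H: "Pd \<delta> N < ennreal (w0 * \<eta>) \<and> max N0 n \<le> N"
      have hN: "(1/2::real)^N \<le> (1/2)^n" using H by (intro power_decreasing) auto
      have hN2: "(1/2::real)^N \<le> \<eta>" using hN n by linarith
      have "g N \<le> ennreal (1/(1-\<delta>)) + ennreal (1/w0) * Pd \<delta> N + ennreal ((1/2)^N)"
        using H \<delta> by (intro upper) auto
      also have "\<dots> \<le> ennreal s + ennreal (1/w0) * ennreal (w0 * \<eta>) + ennreal \<eta>"
        using H hN2 ds by (intro add_mono mult_left_mono ennreal_leI) auto
      also have "\<dots> = ennreal (s + 2 * \<eta>)"
        using w0 \<eta> s by (simp add: ennreal_mult[symmetric] ennreal_plus[symmetric] del: ennreal_plus)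
      also have "\<dots> < ennreal rb" using s \<eta> by (intro ennreal_lessI) (auto simp: \<eta>_def field_simps)
      also have "\<dots> < a" using b rb by simp
      finally show "g N < a" .
    qed
  qed
qed

theorem proposition3p10:
  fixes Q :: "'x \<Rightarrow> real measure"
  assumes prob: "\<And>x. prob_space (Q x)"
    and sets: "\<And>x. sets (Q x) = sets borel"
    and pos: "\<And>x. AE w in Q x. 0 < w"
    and int: "\<And>x. integrable (Q x) (\<lambda>w. w)"
    and mean1: "\<And>x. (\<integral>w. w \<partial>Q x) = 1"
  shows "(W3 Q \<longrightarrow> W1 Q) \<and> (W1 Q \<and> W4 Q \<longrightarrow> W2 Q)"
proof (intro conjI impI)
  assume "W3 Q"
  then show "W1 Q" by (intro part1[of Q]) (use prob sets pos int mean1 in auto)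
next
  assume "W1 Q \<and> W4 Q"
  then show "W2 Q" by (intro part2[of Q]) (use prob sets pos in auto)
qed

end
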